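(* Let $m\ge1$, let $g(t)=\varphi(t)h$ where $\varphi\in AC([0,1])$ is non-decreasing and non-negative and $h\in H^1(\Omega)$ is fixed, let $K_0\in\mathcal K_m^f(\overline\Omega)$, and let $K\colon[0,1]\to\mathcal K_m^f(\overline\Omega)$ satisfy conditions (a)–(e) below. Then $\mathcal E(g(t),K(t))\le\mathcal E(g(t),K(s))$ for $0\le s<t\le1$.
   Context: $\Omega\subset\mathbb R^2$ is a bounded connected open set with Lipschitz boundary; $\partial_N\Omega$ is a relatively open subset of $\partial\Omega$ with finitely many connected components, $\partial_D\Omega:=\partial\Omega\setminus\overline{\partial_N\Omega}$. $\mathcal K_m^f(\overline\Omega)$: compact subsets of $\overline\Omega$ with at most $m$ connected components and finite $\mathcal H^1$-measure. $L^{1,2}(A):=\{u\in L^2_{loc}(A):\nabla u\in L^2(A;\mathbb R^2)\}$ (quasi-continuous representatives; q.e. = up to $H^1$-capacity zero). $\mathcal E(g,K):=\min\{\int_{\Omega\setminus K}|\nabla v|^2dx+\mathcal H^1(K): v\in L^{1,2}(\Omega\setminus K),\ v=g\text{ q.e. on }\partial_D\Omega\setminus K\}$. Conditions: (a) $K_0\subset K(s)\subset K(t)$ for $0\le s\le t\le1$; (b) $\mathcal E(g(0),K(0))\le\mathcal E(g(0),K)$ for all $K\in\mathcal K_m^f(\overline\Omega)$, $K\supset K_0$; (c) for all $t\in[0,1]$, $\mathcal E(g(t),K(t))\le\mathcal E(g(t),K)$ for all $K\in\mathcal K_m^f(\overline\Omega)$, $K\supset K(t)$; (d) $t\mapsto\mathcal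 E(g(t),K(t))$ is absolutely continuous on $[0,1]$; (e) for a.e. $t$, $\frac{d}{ds}\mathcal E(g(t),K(s))|_{s=t}=0$. *)

theory Defs
  imports "HOL-Analysis.Analysis"
begin

type_synonym pt = "real^2"

definition H1_delta :: "real \<Rightarrow> pt set \<Rightarrow> ennreal" where
  "H1_delta \<delta> A = (INF C \<in> {C :: nat \<Rightarrow> pt set. A \<subseteq> (\<Union>i. C i) \<and>
        (\<forall>i. bounded (C i) \<and> diameter (C i) \<le> \<delta>)}. (\<Sum>i. ennreal (diameter (C i))))"

definition H1 :: "pt set \<Rightarrow> ennreal" where
  "H1 A = (SUP \<delta> \<in> {0<..}. H1_delta \<delta> A)"

coinductive smooth_fun :: "(pt \<Rightarrow> real) \<Rightarrow> bool" where
  "continuous_on UNIV f \<Longrightarrow>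
   (\<And>x. (f has_derivative (\<lambda>v. \<Sum>i\<in>UNIV. D i x * v $ i)) (at x)) \<Longrightarrow>
   (\<And>i. smooth_fun (D i)) \<Longrightarrow> smooth_fun f"

definition test_fun :: "pt set \<Rightarrow> (pt \<Rightarrow> real) \<Rightarrow> bool" where
  "test_fun A \<phi> \<longleftrightarrow> smooth_fun \<phi> \<and> compact (closure {x. \<phi> x \<noteq> 0})
      \<and> closure {x. \<phi> x \<noteq> 0} \<subseteq> A"

definition partial :: "2 \<Rightarrow> (pt \<Rightarrow> real) \<Rightarrow> pt \<Rightarrow> real" where
  "partial i \<phi> x = frechet_derivative \<phi> (at x) (axis i 1)"

definition weak_grad :: "pt set \<Rightarrow> (pt \<Rightarrow> real) \<Rightarrow> (pt \<Rightarrow> pt) \<Rightarrow> bool" where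
  "weak_grad A u G \<longleftrightarrow>
     (\<forall>C. compact C \<and> C \<subseteq> A \<longrightarrow> set_integrable lebesgue C u \<and>
          (\<forall>i. set_integrable lebesgue C (\<lambda>x. G x $ i))) \<and>
     (\<forall>\<phi>. test_fun A \<phi> \<longrightarrow> (\<forall>i.
        (LINT x:A|lebesgue. u x * partial i \<phi> x) = - (LINT x:A|lebesgue. G x $ i * \<phi> x)))"

definition L2_on :: "pt set \<Rightarrow> (pt \<Rightarrow> real) \<Rightarrow> bool" where
  "L2_on A u \<longleftrightarrow> set_borel_measurable lebesgue A u \<and> set_integrable lebesgue A (\<lambda>x. (u x)\<^sup>2)"

definition L2v_on :: "pt set \<Rightarrow> (pt \<Rightarrow> pt) \<Rightarrow> bool" where
  "L2v_on A G \<longleftrightarrow> set_borel_measurable lebesgue A G \<and> set_integrable lebesgue A (\<lambda>x. (norm (G x))\<^sup>2)"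

definition L2loc_on :: "pt set \<Rightarrow> (pt \<Rightarrow> real) \<Rightarrow> bool" where
  "L2loc_on A u \<longleftrightarrow> (\<forall>C. compact C \<and> C \<subseteq> A \<longrightarrow> L2_on C u)"

definition H1space :: "pt set \<Rightarrow> (pt \<Rightarrow> real) set" where
  "H1space A = {u. L2_on A u \<and> (\<exists>G. weak_grad A u G \<and> L2v_on A G)}"

definition cap :: "pt set \<Rightarrow> ennreal" where
  "cap E = (INF uG \<in> {(u, G). weak_grad UNIV u G \<and> L2_on UNIV u \<and> L2v_on UNIV G \<and>
        (\<exists>U. open U \<and> E \<subseteq> U \<and> (AE x in lebesgue. x \<in> U \<longrightarrow> 1 \<le> u x))}.
      ennreal (LINT x|lebesgue. (fst uG x)\<^sup>2 + (norm (snd uG x))\<^sup>2))"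

definition quasicont_on :: "pt set \<Rightarrow> (pt \<Rightarrow> real) \<Rightarrow> bool" where
  "quasicont_on S f \<longleftrightarrow> (\<forall>\<epsilon>>0. \<exists>U. open U \<and> cap U < ennreal \<epsilon> \<and> continuous_on (S - U) f)"

definition lipschitz_boundary :: "pt set \<Rightarrow> bool" where
  "lipschitz_boundary \<Omega> \<longleftrightarrow> (\<forall>x\<in>frontier \<Omega>. \<exists>r>0. \<exists>(A :: pt \<Rightarrow> pt) (f :: real \<Rightarrow> real) (L :: real).
     orthogonal_transformation A \<and> lipschitz_on L UNIV f \<and>
     \<Omega> \<inter> ball x r = {y \<in> ball x r. f ((A (y - x)) $ 1) < (A (y - x)) $ 2})"

definition Dir_bdry :: "pt set \<Rightarrow> pt set \<Rightarrow> pt set" where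
  "Dir_bdry \<Omega> N = frontier \<Omega> - closure N"

definition Kmf :: "nat \<Rightarrow> pt set \<Rightarrow> pt set set" where
  "Kmf m \<Omega> = {K. compact K \<and> K \<subseteq> closure \<Omega> \<and> finite (components K) \<and>
                 card (components K) \<le> m \<and> H1 K < top}"

definition bc_qe :: "pt set \<Rightarrow> pt set \<Rightarrow> pt set \<Rightarrow> (pt \<Rightarrow> real) \<Rightarrow> (pt \<Rightarrow> real) \<Rightarrow> bool" where
  "bc_qe \<Omega> N K g v \<longleftrightarrow> (\<exists>vt gt.
      quasicont_on (closure \<Omega> - K) vt \<and> (AE x in lebesgue. x \<in> \<Omega> - K \<longrightarrow> vt x = v x) \<and>
      quasicont_on (closure \<Omega>) gt \<and> (AE x in lebesgue. x \<in> \<Omega> \<longrightarrow> gt x = g x) \<and>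
      cap {x \<in> Dir_bdry \<Omega> N - K. vt x \<noteq> gt x} = 0)"

definition energy :: "pt set \<Rightarrow> pt set \<Rightarrow> (pt \<Rightarrow> real) \<Rightarrow> pt set \<Rightarrow> ennreal" where
  "energy \<Omega> N g K = (INF vG \<in> {(v, G). L2loc_on (\<Omega> - K) v \<and> weak_grad (\<Omega> - K) v G \<and>
        L2v_on (\<Omega> - K) G \<and> bc_qe \<Omega> N K g v}.
      ennreal (LINT x:(\<Omega> - K)|lebesgue. (norm (snd vG x))\<^sup>2)) + H1 K"

definition abs_cont_on :: "real \<Rightarrow> real \<Rightarrow> (real \<Rightarrow> real) \<Rightarrow> bool" where
  "abs_cont_on a b f \<longleftrightarrow> (\<forall>\<epsilon>>0. \<exists>\<delta>>0. \<forall>I :: (real \<times> real) set.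
     finite I \<longrightarrow> (\<forall>(c,d)\<in>I. a \<le> c \<and> c \<le> d \<and> d \<le> b) \<longrightarrow>
     (\<forall>(c,d)\<in>I. \<forall>(c',d')\<in>I. (c,d) \<noteq> (c',d') \<longrightarrow> d \<le> c' \<or> d' \<le> c) \<longrightarrow>
     (\<Sum>(c,d)\<in>I. d - c) < \<delta> \<longrightarrow> (\<Sum>(c,d)\<in>I. \<bar>f d - f c\<bar>) < \<epsilon>)"

end

theory Submission
  imports Defs
begin

lemma intervals_disj:
  fixes c d c' d' :: real
  assumes "c < d" "c' < d'" "{c<..<d} \<inter> {c'<..<d'} = {}"
  shows "d \<le> c' \<or> d' \<le> c"
proof (rule ccontr)
  assume "\<not> (d \<le> c' \<or> d' \<le> c)"
  hence "c' < d" "c < d'" by auto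
  define z where "z = (max c c' + min d d') / 2"
  have "z \<in> {c<..<d} \<inter> {c'<..<d'}" unfolding z_def using assms \<open>c' < d\<close> \<open>c < d'\<close>
    by (auto simp: max_def min_def split: if_splits)
  thus False using assms by auto
qed

lemma ac_step:
  fixes F :: "real \<Rightarrow> real"
  assumes ac: "abs_cont_on a b F" and ab: "a \<le> b"
    and N: "N \<in> sets lebesgue" "emeasure lebesgue N = 0"
    and loc: "\<And>x \<epsilon>. x \<in> {a..b} \<Longrightarrow> x \<notin> N \<Longrightarrow> \<epsilon> > 0 \<Longrightarrow> \<exists>r>0. \<forall>c d. a \<le> c \<and> c \<le> x \<and> x \<le> d \<and> d \<le> b
            \<and> x - c < r \<and> d - x < r \<longrightarrow> F d - F c \<le> \<epsilon> * (d - c)"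
    and e: "\<epsilon> > 0"
  shows "F b - F a \<le> \<epsilon> * (b - a) + \<epsilon>"
proof -
  obtain \<delta> where \<delta>: "\<delta> > 0" and \<delta>I: "\<And>I. finite I \<Longrightarrow> (\<forall>(c,d)\<in>I. a \<le> c \<and> c \<le> d \<and> d \<le> b) \<Longrightarrow>
     (\<forall>(c,d)\<in>I. \<forall>(c',d')\<in>I. (c,d) \<noteq> (c',d') \<longrightarrow> d \<le> c' \<or> d' \<le> c) \<Longrightarrow>
     (\<Sum>(c,d)\<in>I. d - c) < \<delta> \<Longrightarrow> (\<Sum>(c,d)\<in>I. \<bar>F d - F c\<bar>) < \<epsilon>"
    using ac e unfolding abs_cont_on_def by meson
  obtain T where T: "open T" "N \<subseteq> T" "(T - N) \<in> lmeasurable" "emeasure lebesgue (T - N) < ennreal \<delta>"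
    using sets_lebesgue_outer_open[OF N(1) \<delta>] by blast
  have Nl: "N \<in> lmeasurable" using N by (simp add: fmeasurableI)
  have TU: "T = (T - N) \<union> N" using T by auto
  have Tl: "T \<in> lmeasurable" using T(3) Nl by (subst TU) (rule fmeasurable.Un)
  have "emeasure lebesgue T \<le> emeasure lebesgue (T - N) + emeasure lebesgue N"
    by (subst TU) (rule emeasure_subadditive, use T Nl in auto)
  hence "emeasure lebesgue T < ennreal \<delta>" using T(4) N(2) by simp
  hence mT: "measure lebesgue T < \<delta>" using Tl \<delta>
    by (metis emeasure_eq_measure2 ennreal_less_iff measure_nonneg)
  have "\<forall>x\<in>{a..b}-N. \<exists>r>0. \<forall>c d. a \<le> c \<and> c \<le> x \<and> x \<le> d \<and> d \<le> b
            \<and> x - c < r \<and> d - x < r \<longrightarrow> F d - F c \<le> \<epsilon> * (d - c)"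
    using loc e by blast
  then obtain R where R: "\<And>x. x \<in> {a..b}-N \<Longrightarrow> R x > 0 \<and> (\<forall>c d. a \<le> c \<and> c \<le> x \<and> x \<le> d \<and> d \<le> b
            \<and> x - c < R x \<and> d - x < R x \<longrightarrow> F d - F c \<le> \<epsilon> * (d - c))"
    by metis
  define \<gamma> where "\<gamma> x = (if x \<in> N then T else ball x (if x \<in> {a..b} then R x else 1))" for x
  have "gauge \<gamma>" unfolding gauge_def \<gamma>_def using T R by auto
  then obtain p where p: "p tagged_division_of {a..b}" "\<gamma> fine p"
    using fine_division_exists_real by blast
  have pfin: "finite p" using tagged_division_ofD(1)[OF p(1)] .
  have Kint: "\<exists>c d. K = {c..d} \<and> c \<le> d \<and> a \<le> c \<and> d \<le> b \<and> c \<le> x \<and> x \<le> d" if xK: "(x,K) \<in> p" for x K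
  proof -
    obtain c d where "K = cbox c d" using tagged_division_ofD(4)[OF p(1) xK] by blast
    moreover have "x \<in> K" "K \<subseteq> {a..b}" using tagged_division_ofD(2,3)[OF p(1) xK] by auto
    ultimately show ?thesis by auto
  qed
  have sum_eq: "F b - F a = (\<Sum>(x,K)\<in>p. F (Sup K) - F (Inf K))"
    using additive_tagged_division_1[OF ab p(1), of F] by simp
  define p1 where "p1 = {(x,K)\<in>p. x \<notin> N}"
  define p2 where "p2 = {(x,K)\<in>p. x \<in> N \<and> Inf K < Sup K}"
  define p3 where "p3 = {(x,K)\<in>p. x \<in> N \<and> \<not> Inf K < Sup K}"
  have pU: "p = p1 \<union> (p2 \<union> p3)" unfolding p1_def p2_def p3_def by auto
  have sub: "p1 \<subseteq> p" "p2 \<subseteq> p" "p3 \<subseteq> p" unfolding p1_def p2_def p3_def by auto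
  have fins: "finite p1" "finite p2" "finite p3" using finite_subset[OF sub(1) pfin] finite_subset[OF sub(2) pfin] finite_subset[OF sub(3) pfin] by auto
  have "(\<Sum>(x,K)\<in>p. F (Sup K) - F (Inf K)) = (\<Sum>(x,K)\<in>p1. F (Sup K) - F (Inf K)) +
     ((\<Sum>(x,K)\<in>p2. F (Sup K) - F (Inf K)) + (\<Sum>(x,K)\<in>p3. F (Sup K) - F (Inf K)))"
    apply (subst pU)
    apply (subst sum.union_disjoint, use fins in \<open>auto simp: p1_def p2_def p3_def\<close>)
    apply (subst sum.union_disjoint, use fins in \<open>auto simp: p1_def p2_def p3_def\<close>)
    done
  moreover have "(\<Sum>(x,K)\<in>p3. F (Sup K) - F (Inf K)) = 0"
  proof (rule sum.neutral, clarify)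
    fix x K assume "(x,K) \<in> p3"
    then obtain c d where "K = {c..d}" "c \<le> d" "\<not> Inf K < Sup K" using Kint unfolding p3_def by blast
    thus "F (Sup K) - F (Inf K) = 0" by auto
  qed
  moreover have "(\<Sum>(x,K)\<in>p1. F (Sup K) - F (Inf K)) \<le> \<epsilon> * (b - a)"
  proof -
    have "(\<Sum>(x,K)\<in>p1. F (Sup K) - F (Inf K)) \<le> (\<Sum>(x,K)\<in>p1. \<epsilon> * measure lborel K)"
    proof (rule sum_mono, clarify)
      fix x K assume xK: "(x,K) \<in> p1"
      then obtain c d where cd: "K = {c..d}" "c \<le> d" "a \<le> c" "d \<le> b" "c \<le> x" "x \<le> d"
        using Kint unfolding p1_def by blast
      have xN: "x \<in> {a..b} - N" using xK cd unfolding p1_def by auto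
      have "K \<subseteq> \<gamma> x" using p(2) xK unfolding fine_def p1_def by blast
      hence "K \<subseteq> ball x (R x)" using xN unfolding \<gamma>_def by auto
      moreover have "c \<in> K" "d \<in> K" using cd by auto
      ultimately have "c \<in> ball x (R x)" "d \<in> ball x (R x)" by auto
      hence "x - c < R x" "d - x < R x" using cd by (auto simp: dist_real_def)
      hence "F d - F c \<le> \<epsilon> * (d - c)" using R[OF xN] cd by blast
      thus "F (Sup K) - F (Inf K) \<le> \<epsilon> * measure lborel K" using cd by simp
    qed
    also have "\<dots> \<le> (\<Sum>(x,K)\<in>p. \<epsilon> * measure lborel K)"
      by (rule sum_mono2[OF pfin]) (use e in \<open>auto simp: p1_def\<close>)
    also have "\<dots> = \<epsilon> * (\<Sum>(x,K)\<in>p. measure lborel K)"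
      by (simp add: sum_distrib_left case_prod_unfold)
    also have "(\<Sum>(x,K)\<in>p. measure lborel K) = b - a"
      using additive_content_tagged_division[of p a b] p(1) ab by simp
    finally show ?thesis .
  qed
  moreover have "(\<Sum>(x,K)\<in>p2. F (Sup K) - F (Inf K)) < \<epsilon>"
  proof -
    define Q where "Q = snd ` p2"
    define I where "I = (\<lambda>K. (Inf K, Sup K)) ` Q"
    have injs: "inj_on snd p2"
    proof (rule inj_onI)
      fix u v assume A: "u \<in> p2" "v \<in> p2" "snd u = snd v"
      obtain x K where u: "u = (x,K)" by (cases u)
      obtain y L where v: "v = (y,L)" by (cases v)
      have LK: "L = K" using A u v by simp
      show "u = v"
      proof (rule ccontr)
        assume "u \<noteq> v"
        hence "interior K \<inter> interior K = {}" using tagged_division_ofD(5)[OF p(1), of x K y K] A u v LK unfolding p2_def by auto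
        moreover obtain c d where "K = {c..d}" "Inf K < Sup K" "c \<le> d"
          using A u Kint unfolding p2_def by blast
        ultimately show False by auto
      qed
    qed
    have QK: "\<exists>c d. K = {c..d} \<and> c < d \<and> a \<le> c \<and> d \<le> b" if KQ: "K \<in> Q" for K
    proof -
      obtain x where "(x,K) \<in> p2" using KQ unfolding Q_def by auto
      then obtain c d where "K = {c..d}" "c \<le> d" "a \<le> c" "d \<le> b" "Inf K < Sup K"
        using Kint unfolding p2_def by blast
      thus ?thesis by auto
    qed
    have injI: "inj_on (\<lambda>K. (Inf K, Sup K)) Q"
    proof (rule inj_onI)
      fix K L assume "K \<in> Q" "L \<in> Q" and eq: "(Inf K, Sup K) = (Inf L, Sup L)"
      note eq
      moreover obtain c d where "K = {c..d}" "c < d" using QK \<open>K \<in> Q\<close> by blast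
      moreover obtain c' d' where "L = {c'..d'}" "c' < d'" using QK \<open>L \<in> Q\<close> by blast
      ultimately show "K = L" by auto
    qed
    have finQ: "finite Q" using fins unfolding Q_def by auto
    have "(\<Sum>(x,K)\<in>p2. F (Sup K) - F (Inf K)) \<le> (\<Sum>(x,K)\<in>p2. \<bar>F (Sup K) - F (Inf K)\<bar>)"
      by (rule sum_mono) auto
    also have "\<dots> = (\<Sum>K\<in>Q. \<bar>F (Sup K) - F (Inf K)\<bar>)"
      unfolding Q_def by (subst sum.reindex[OF injs]) (simp add: case_prod_unfold)
    also have "\<dots> = (\<Sum>(c,d)\<in>I. \<bar>F d - F c\<bar>)"
      unfolding I_def by (subst sum.reindex[OF injI]) simp
    also have "\<dots> < \<epsilon>"
    proof (rule \<delta>I)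
      show "finite I" using finQ unfolding I_def by auto
      show "\<forall>(c,d)\<in>I. a \<le> c \<and> c \<le> d \<and> d \<le> b" unfolding I_def using QK by fastforce
      have disj: "d \<le> c' \<or> d' \<le> c" if A: "(c,d) \<in> I" "(c',d') \<in> I" "(c,d) \<noteq> (c',d')" for c d c' d'
      proof -
        from A obtain K L where KL: "K \<in> Q" "L \<in> Q" "c = Inf K" "d = Sup K" "c' = Inf L" "d' = Sup L"
          unfolding I_def by auto
        obtain c1 d1 where K: "K = {c1..d1}" "c1 < d1" using QK KL by blast
        obtain c2 d2 where L: "L = {c2..d2}" "c2 < d2" using QK KL by blast
        have cd: "c = c1" "d = d1" "c' = c2" "d' = d2" using KL K L by auto
        have "K \<noteq> L" using A KL by auto
        obtain x y where "(x,K) \<in> p2" "(y,L) \<in> p2" using KL unfolding Q_def by auto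
        hence "interior K \<inter> interior L = {}" using tagged_division_ofD(5)[OF p(1)] \<open>K \<noteq> L\<close> unfolding p2_def by blast
        hence "{c1<..<d1} \<inter> {c2<..<d2} = {}" using K L by simp
        thus "d \<le> c' \<or> d' \<le> c" using intervals_disj K L cd by blast
      qed
      show "\<forall>(c,d)\<in>I. \<forall>(c',d')\<in>I. (c,d) \<noteq> (c',d') \<longrightarrow> d \<le> c' \<or> d' \<le> c"
        using disj by blast
      have "(\<Sum>(c,d)\<in>I. d - c) = (\<Sum>K\<in>Q. Sup K - Inf K)"
        unfolding I_def by (subst sum.reindex[OF injI]) simp
      also have "\<dots> = (\<Sum>K\<in>Q. measure lebesgue K)"
      proof (rule sum.cong[OF refl])
        fix K assume "K \<in> Q"
        then obtain c d where "K = {c..d}" "c < d" using QK by blast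
        thus "Sup K - Inf K = measure lebesgue K" by simp
      qed
      also have "\<dots> = measure lebesgue (\<Union>Q)"
      proof (rule content_division)
        have "snd ` p division_of {a..b}" using division_of_tagged_division[OF p(1)] .
        hence "snd ` p division_of \<Union>(snd ` p)" by (metis division_ofD(6))
        moreover have "Q \<subseteq> snd ` p" unfolding Q_def p2_def by auto
        ultimately show "Q division_of \<Union>Q" by (rule division_of_subset)
      qed
      also have "\<dots> \<le> measure lebesgue T"
      proof (rule measure_mono_fmeasurable)
        show "\<Union>Q \<subseteq> T"
        proof
          fix z assume "z \<in> \<Union>Q"
          then obtain x K where "(x,K) \<in> p2" "z \<in> K" unfolding Q_def by auto
          moreover hence "K \<subseteq> \<gamma> x" using p(2) unfolding fine_def p2_def by blast
          ultimately show "z \<in> T" unfolding \<gamma>_def p2_def by auto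
        qed
        show "\<Union>Q \<in> sets lebesgue" proof (rule sets.finite_Union[OF finQ], rule subsetI)
          fix K assume "K \<in> Q" then obtain c d where "K = {c..d}" using QK by blast
          thus "K \<in> sets lebesgue" by simp
        qed
        show "T \<in> fmeasurable lebesgue" using Tl .
      qed
      finally show "(\<Sum>(c,d)\<in>I. d - c) < \<delta>" using mT by linarith
    qed
    finally show ?thesis .
  qed
  ultimately show ?thesis using sum_eq by linarith
qed


definition adm :: "pt set \<Rightarrow> pt set \<Rightarrow> (pt \<Rightarrow> real) \<Rightarrow> pt set \<Rightarrow> ((pt \<Rightarrow> real) \<times> (pt \<Rightarrow> pt)) set" where
  "adm \<Omega> N g K = {(v, G). L2loc_on (\<Omega> - K) v \<and> weak_grad (\<Omega> - K) v G \<and>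
        L2v_on (\<Omega> - K) G \<and> bc_qe \<Omega> N K g v}"

definition dval :: "pt set \<Rightarrow> pt set \<Rightarrow> ((pt \<Rightarrow> real) \<times> (pt \<Rightarrow> pt)) \<Rightarrow> ennreal" where
  "dval \<Omega> K vG = ennreal (LINT x:(\<Omega> - K)|lebesgue. (norm (snd vG x))\<^sup>2)"

definition Dir :: "pt set \<Rightarrow> pt set \<Rightarrow> (pt \<Rightarrow> real) \<Rightarrow> pt set \<Rightarrow> ennreal" where
  "Dir \<Omega> N g K = (INF vG\<in>adm \<Omega> N g K. dval \<Omega> K vG)"

lemma energy_Dir: "energy \<Omega> N g K = Dir \<Omega> N g K + H1 K"
  unfolding energy_def Dir_def adm_def dval_def by simp

lemma L2_on_scale: "L2_on A u \<Longrightarrow> L2_on A (\<lambda>x. c * u x)"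
proof -
  assume A: "L2_on A u"
  have m: "(\<lambda>x. indicator A x *\<^sub>R u x) \<in> borel_measurable lebesgue"
    using A unfolding L2_on_def set_borel_measurable_def by simp
  have "(\<lambda>x. indicator A x *\<^sub>R (c * u x)) = (\<lambda>x. c * (indicator A x *\<^sub>R u x))" by auto
  hence m2: "(\<lambda>x. indicator A x *\<^sub>R (c * u x)) \<in> borel_measurable lebesgue"
    using m by simp
  have i: "set_integrable lebesgue A (\<lambda>x. (u x)\<^sup>2)" using A unfolding L2_on_def by simp
  have "set_integrable lebesgue A (\<lambda>x. c\<^sup>2 * (u x)\<^sup>2)"
    using set_integrable_mult_right[OF i] by simp
  hence "set_integrable lebesgue A (\<lambda>x. (c * u x)\<^sup>2)" by (simp add: power_mult_distrib)
  thus ?thesis using m2 unfolding L2_on_def set_borel_measurable_def by simp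
qed

lemma L2loc_on_scale: "L2loc_on A u \<Longrightarrow> L2loc_on A (\<lambda>x. c * u x)"
  unfolding L2loc_on_def using L2_on_scale by blast

lemma L2v_on_scale: "L2v_on A G \<Longrightarrow> L2v_on A (\<lambda>x. c *\<^sub>R G x)"
proof -
  assume A: "L2v_on A G"
  have m: "(\<lambda>x. indicator A x *\<^sub>R G x) \<in> borel_measurable lebesgue"
    using A unfolding L2v_on_def set_borel_measurable_def by simp
  have eq: "(\<lambda>x. indicator A x *\<^sub>R (c *\<^sub>R G x)) = (\<lambda>x. c *\<^sub>R (indicator A x *\<^sub>R G x))" by auto
  have m2': "(\<lambda>x. c *\<^sub>R (indicator A x *\<^sub>R G x)) \<in> borel_measurable lebesgue"
    by (intro borel_measurable_scaleR borel_measurable_const m)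
  have m2: "(\<lambda>x. indicator A x *\<^sub>R (c *\<^sub>R G x)) \<in> borel_measurable lebesgue"
    unfolding eq by (rule m2')
  have i: "set_integrable lebesgue A (\<lambda>x. (norm (G x))\<^sup>2)" using A unfolding L2v_on_def by simp
  have "set_integrable lebesgue A (\<lambda>x. c\<^sup>2 * (norm (G x))\<^sup>2)"
    using set_integrable_mult_right[OF i] by simp
  hence "set_integrable lebesgue A (\<lambda>x. (norm (c *\<^sub>R G x))\<^sup>2)" by (simp add: power_mult_distrib)
  thus ?thesis using m2 unfolding L2v_on_def set_borel_measurable_def by simp
qed

lemma weak_grad_scale: "weak_grad A u G \<Longrightarrow> weak_grad A (\<lambda>x. c * u x) (\<lambda>x. c *\<^sub>R G x)"
proof -
  assume W: "weak_grad A u G"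
  show ?thesis unfolding weak_grad_def
  proof (intro conjI allI impI)
    fix C assume C: "compact C \<and> C \<subseteq> A"
    show "set_integrable lebesgue C (\<lambda>x. c * u x)"
      using W C unfolding weak_grad_def by (auto intro: set_integrable_mult_right)
    fix i
    have "set_integrable lebesgue C (\<lambda>x. c * (G x $ i))"
      using W C unfolding weak_grad_def by (auto intro: set_integrable_mult_right)
    thus "set_integrable lebesgue C (\<lambda>x. (c *\<^sub>R G x) $ i)" by simp
  next
    fix \<phi> i assume T: "test_fun A \<phi>"
    have eq: "(LINT x:A|lebesgue. u x * partial i \<phi> x) = - (LINT x:A|lebesgue. G x $ i * \<phi> x)"
      using W T unfolding weak_grad_def by blast
    have "(LINT x:A|lebesgue. c * u x * partial i \<phi> x) = c * (LINT x:A|lebesgue. u x * partial i \<phi> x)"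
      by (simp add: mult.assoc)
    moreover have "(LINT x:A|lebesgue. (c *\<^sub>R G x) $ i * \<phi> x) = c * (LINT x:A|lebesgue. G x $ i * \<phi> x)"
      by (simp add: mult.assoc)
    ultimately show "(LINT x:A|lebesgue. c * u x * partial i \<phi> x) = - (LINT x:A|lebesgue. (c *\<^sub>R G x) $ i * \<phi> x)"
      using eq by simp
  qed
qed

lemma quasicont_on_scale: "quasicont_on S f \<Longrightarrow> quasicont_on S (\<lambda>x. c * f x)"
  unfolding quasicont_on_def
proof (intro allI impI)
  fix e :: real assume A: "\<forall>\<epsilon>>0. \<exists>U. open U \<and> cap U < ennreal \<epsilon> \<and> continuous_on (S - U) f" "e > 0"
  then obtain U where "open U" "cap U < ennreal e" "continuous_on (S - U) f" by blast
  thus "\<exists>U. open U \<and> cap U < ennreal e \<and> continuous_on (S - U) (\<lambda>x. c * f x)"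
    by (intro exI[of _ U]) (auto intro: continuous_on_mult_left)
qed

lemma bc_qe_scale: assumes "bc_qe \<Omega> N K g v" "c \<noteq> 0"
  shows "bc_qe \<Omega> N K (\<lambda>x. c * g x) (\<lambda>x. c * v x)"
proof -
  obtain vt gt where B: "quasicont_on (closure \<Omega> - K) vt" "(AE x in lebesgue. x \<in> \<Omega> - K \<longrightarrow> vt x = v x)"
      "quasicont_on (closure \<Omega>) gt" "(AE x in lebesgue. x \<in> \<Omega> \<longrightarrow> gt x = g x)"
      "cap {x \<in> Dir_bdry \<Omega> N - K. vt x \<noteq> gt x} = 0"
    using assms(1) unfolding bc_qe_def by blast
  have eq: "{x \<in> Dir_bdry \<Omega> N - K. c * vt x \<noteq> c * gt x} = {x \<in> Dir_bdry \<Omega> N - K. vt x \<noteq> gt x}"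
    using assms(2) by auto
  show ?thesis unfolding bc_qe_def
  proof (intro exI conjI)
    show "quasicont_on (closure \<Omega> - K) (\<lambda>x. c * vt x)" using quasicont_on_scale[OF B(1)] .
    show "AE x in lebesgue. x \<in> \<Omega> - K \<longrightarrow> c * vt x = c * v x" using B(2) by (rule eventually_mono) auto
    show "quasicont_on (closure \<Omega>) (\<lambda>x. c * gt x)" using quasicont_on_scale[OF B(3)] .
    show "AE x in lebesgue. x \<in> \<Omega> \<longrightarrow> c * gt x = c * g x" using B(4) by (rule eventually_mono) auto
    show "cap {x \<in> Dir_bdry \<Omega> N - K. c * vt x \<noteq> c * gt x} = 0" unfolding eq by (rule B(5))
  qed
qed

lemma adm_scale: assumes "(v,G) \<in> adm \<Omega> N g K" "c \<noteq> 0"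
  shows "((\<lambda>x. c * v x), (\<lambda>x. c *\<^sub>R G x)) \<in> adm \<Omega> N (\<lambda>x. c * g x) K"
proof -
  have A: "L2loc_on (\<Omega> - K) v" "weak_grad (\<Omega> - K) v G" "L2v_on (\<Omega> - K) G" "bc_qe \<Omega> N K g v"
    using assms(1) unfolding adm_def by auto
  show ?thesis unfolding adm_def mem_Collect_eq case_prod_conv
    using L2loc_on_scale[OF A(1)] weak_grad_scale[OF A(2)] L2v_on_scale[OF A(3)] bc_qe_scale[OF A(4) assms(2)]
    by blast
qed

lemma dval_scale: "dval \<Omega> K ((\<lambda>x. c * v x), (\<lambda>x. c *\<^sub>R G x)) = ennreal (c\<^sup>2) * dval \<Omega> K (v, G)"
proof -
  have eq1: "(LINT x:(\<Omega> - K)|lebesgue. (norm (c *\<^sub>R G x))\<^sup>2) = c\<^sup>2 * (LINT x:(\<Omega> - K)|lebesgue. (norm (G x))\<^sup>2)"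
  proof -
    have pw: "\<And>x. (norm (c *\<^sub>R G x))\<^sup>2 = c\<^sup>2 * (norm (G x))\<^sup>2"
      by (simp add: power_mult_distrib)
    show ?thesis unfolding pw by (rule set_integral_mult_right)
  qed
  have nonneg: "(LINT x:(\<Omega> - K)|lebesgue. (norm (G x))\<^sup>2) \<ge> 0"
    unfolding set_lebesgue_integral_def by (intro Bochner_Integration.integral_nonneg_AE AE_I2) simp
  show ?thesis unfolding dval_def snd_conv eq1 by (rule ennreal_mult[OF zero_le_power2 nonneg])
qed


lemma ennreal_INF_cmult:
  fixes k :: ennreal
  assumes "k \<noteq> 0" "k \<noteq> top"
  shows "k * (INF i\<in>A. f i) = (INF i\<in>A. k * f i)"
proof (rule antisym)
  show "k * (INF i\<in>A. f i) \<le> (INF i\<in>A. k * f i)"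
    by (intro INF_greatest mult_left_mono INF_lower) auto
  have inv: "inverse k * (k * x) = x" for x :: ennreal
    using assms by (metis divide_ennreal_def mult.commute mult_divide_eq_ennreal)
  have "inverse k * (INF i\<in>A. k * f i) \<le> (INF i\<in>A. f i)"
  proof (intro INF_greatest)
    fix i assume "i \<in> A"
    have "inverse k * (INF i\<in>A. k * f i) \<le> inverse k * (k * f i)"
      by (intro mult_left_mono INF_lower \<open>i \<in> A\<close>) auto
    thus "inverse k * (INF i\<in>A. k * f i) \<le> f i" using inv by simp
  qed
  hence "k * (inverse k * (INF i\<in>A. k * f i)) \<le> k * (INF i\<in>A. f i)"
    by (intro mult_left_mono) auto
  moreover have "k * (inverse k * X) = X" for X :: ennreal
    using inv[of X] by (simp add: ac_simps)
  ultimately show "(INF i\<in>A. k * f i) \<le> k * (INF i\<in>A. f i)" by simp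
qed


lemma weak_grad_zero: "weak_grad A (\<lambda>x. 0) (\<lambda>x. 0)"
  unfolding weak_grad_def by simp

lemma L2_on_zero: "L2_on A (\<lambda>x. 0)"
  unfolding L2_on_def set_borel_measurable_def by simp

lemma L2v_on_zero: "L2v_on A (\<lambda>x. 0)"
  unfolding L2v_on_def set_borel_measurable_def by simp

lemma cap_empty: "cap {} = 0"
proof -
  have "((\<lambda>x. 0), (\<lambda>x. 0)) \<in> {(u, G). weak_grad UNIV u G \<and> L2_on UNIV u \<and> L2v_on UNIV G \<and>
        (\<exists>U. open U \<and> {} \<subseteq> U \<and> (AE x in lebesgue. x \<in> U \<longrightarrow> 1 \<le> u x))}"
    using weak_grad_zero L2_on_zero L2v_on_zero by (auto intro!: exI[of _ "{}"])
  hence "cap {} \<le> ennreal (LINT x|lebesgue. (fst ((\<lambda>x::pt. 0::real), (\<lambda>x::pt. 0::pt)) x)\<^sup>2 + (norm (snd ((\<lambda>x::pt. 0::real), (\<lambda>x::pt. 0::pt)) x))\<^sup>2)"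
    unfolding cap_def by (rule INF_lower)
  thus ?thesis by simp
qed

lemma quasicont_on_zero: "quasicont_on S (\<lambda>x. 0)"
  unfolding quasicont_on_def using cap_empty by (auto intro!: exI[of _ "{}"])

lemma adm_zero: "((\<lambda>x. 0), (\<lambda>x. 0)) \<in> adm \<Omega> N (\<lambda>x. 0) K"
proof -
  have "bc_qe \<Omega> N K (\<lambda>x. 0) (\<lambda>x. 0)"
    unfolding bc_qe_def using quasicont_on_zero cap_empty
    by (intro exI[of _ "\<lambda>x. 0"]) auto
  thus ?thesis unfolding adm_def L2loc_on_def using weak_grad_zero L2_on_zero L2v_on_zero by auto
qed

lemma Dir_scale: "Dir \<Omega> N (\<lambda>x. c * g x) K = ennreal (c\<^sup>2) * Dir \<Omega> N g K"
proof (cases "c = 0")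
  case True
  have "Dir \<Omega> N (\<lambda>x. 0) K \<le> dval \<Omega> K ((\<lambda>x. 0), (\<lambda>x. 0))"
    unfolding Dir_def by (rule INF_lower[OF adm_zero])
  hence "Dir \<Omega> N (\<lambda>x. 0) K = 0" unfolding dval_def by simp
  thus ?thesis using True by simp
next
  case False
  define sc where "sc = (\<lambda>a (vG :: (pt \<Rightarrow> real) \<times> (pt \<Rightarrow> pt)). ((\<lambda>x. a * fst vG x), (\<lambda>x. a *\<^sub>R snd vG x)))"
  have eqset: "adm \<Omega> N (\<lambda>x. c * g x) K = sc c ` adm \<Omega> N g K"
  proof
    show "sc c ` adm \<Omega> N g K \<subseteq> adm \<Omega> N (\<lambda>x. c * g x) K"
    proof (rule subsetI)
      fix z assume "z \<in> sc c ` adm \<Omega> N g K"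
      then obtain v G where z: "z = sc c (v, G)" "(v, G) \<in> adm \<Omega> N g K" by auto
      show "z \<in> adm \<Omega> N (\<lambda>x. c * g x) K" unfolding z sc_def fst_conv snd_conv by (rule adm_scale[OF z(2) False])
    qed
    show "adm \<Omega> N (\<lambda>x. c * g x) K \<subseteq> sc c ` adm \<Omega> N g K"
    proof (rule subsetI)
      fix z assume "z \<in> adm \<Omega> N (\<lambda>x. c * g x) K"
      then obtain w H where z: "z = (w, H)" and A: "(w, H) \<in> adm \<Omega> N (\<lambda>x. c * g x) K" by (cases z) auto
      have "sc (1/c) (w, H) \<in> adm \<Omega> N (\<lambda>x. (1/c) * (c * g x)) K"
        unfolding sc_def using adm_scale[OF A, of "1/c"] False by simp
      moreover have "(\<lambda>x. (1/c) * (c * g x)) = g" using False by auto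
      moreover have "(w, H) = sc c (sc (1/c) (w, H))" unfolding sc_def using False by auto
      ultimately show "z \<in> sc c ` adm \<Omega> N g K" unfolding z by (metis image_eqI)
    qed
  qed
  have dv: "dval \<Omega> K (sc c vG) = ennreal (c\<^sup>2) * dval \<Omega> K vG" for vG
    unfolding sc_def using dval_scale[of \<Omega> K c "fst vG" "snd vG"] by simp
  have "Dir \<Omega> N (\<lambda>x. c * g x) K = (INF vG\<in>adm \<Omega> N g K. dval \<Omega> K (sc c vG))"
    unfolding Dir_def eqset image_image ..
  also have "\<dots> = (INF vG\<in>adm \<Omega> N g K. ennreal (c\<^sup>2) * dval \<Omega> K vG)" using dv by simp
  also have "\<dots> = ennreal (c\<^sup>2) * Dir \<Omega> N g K"
    unfolding Dir_def using False by (intro ennreal_INF_cmult[symmetric]) auto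
  finally show ?thesis .
qed

lemma partial_zero:
  assumes "x \<notin> closure {y. \<phi> y \<noteq> 0}"
  shows "partial i \<phi> x = 0"
proof -
  let ?U = "- closure {y. \<phi> y \<noteq> 0}"
  have "((\<lambda>y. 0::real) has_derivative (\<lambda>v. 0)) (at x)" by simp
  hence "(\<phi> has_derivative (\<lambda>v. 0)) (at x)"
  proof (rule has_derivative_transform_within_open[of _ _ _ _ ?U])
    show "open ?U" by auto
    show "x \<in> ?U" using assms by auto
    fix y assume "y \<in> ?U"
    moreover have "{y. \<phi> y \<noteq> 0} \<subseteq> closure {y. \<phi> y \<noteq> 0}" by (rule closure_subset)
    ultimately show "0 = \<phi> y" by auto
  qed
  hence "frechet_derivative \<phi> (at x) = (\<lambda>v. 0)" using frechet_derivative_at by metis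
  thus ?thesis unfolding partial_def by simp
qed

lemma set_integral_eq_sub:
  assumes "B \<subseteq> A" "\<And>x. x \<in> A - B \<Longrightarrow> f x = 0"
  shows "(LINT x:A|M. f x) = (LINT x:B|M. (f x :: real))"
  unfolding set_lebesgue_integral_def
proof (rule Bochner_Integration.integral_cong[OF refl])
  fix x show "indicator A x *\<^sub>R f x = indicator B x *\<^sub>R f x"
    using assms by (cases "x \<in> A"; cases "x \<in> B") auto
qed

lemma weak_grad_sub:
  assumes W: "weak_grad A u G" and BA: "B \<subseteq> A"
  shows "weak_grad B u G"
proof -
  have W1: "\<forall>C. compact C \<and> C \<subseteq> A \<longrightarrow> set_integrable lebesgue C u \<and>
          (\<forall>i. set_integrable lebesgue C (\<lambda>x. G x $ i))"
    using W unfolding weak_grad_def by (rule conjunct1)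
  have W2: "\<forall>\<phi>. test_fun A \<phi> \<longrightarrow> (\<forall>i.
        (LINT x:A|lebesgue. u x * partial i \<phi> x) = - (LINT x:A|lebesgue. G x $ i * \<phi> x))"
    using W unfolding weak_grad_def by (rule conjunct2)
  have P1: "\<forall>C. compact C \<and> C \<subseteq> B \<longrightarrow> set_integrable lebesgue C u \<and>
          (\<forall>i. set_integrable lebesgue C (\<lambda>x. G x $ i))"
  proof (intro allI impI)
    fix C assume "compact C \<and> C \<subseteq> B"
    hence "compact C \<and> C \<subseteq> A" using BA by blast
    thus "set_integrable lebesgue C u \<and> (\<forall>i. set_integrable lebesgue C (\<lambda>x. G x $ i))"
      by (rule W1[rule_format])
  qed
  have P2: "\<forall>\<phi>. test_fun B \<phi> \<longrightarrow> (\<forall>i.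
        (LINT x:B|lebesgue. u x * partial i \<phi> x) = - (LINT x:B|lebesgue. G x $ i * \<phi> x))"
  proof (intro allI impI)
    fix \<phi> i assume T: "test_fun B \<phi>"
    have T': "smooth_fun \<phi>" "compact (closure {x. \<phi> x \<noteq> 0})" "closure {y. \<phi> y \<noteq> 0} \<subseteq> B"
      using T unfolding test_fun_def by auto
    have cl: "closure {y. \<phi> y \<noteq> 0} \<subseteq> A" using T'(3) BA by (rule subset_trans)
    have TA: "test_fun A \<phi>" unfolding test_fun_def using T'(1,2) cl by (intro conjI)
    have z: "x \<notin> closure {y. \<phi> y \<noteq> 0}" if xAB: "x \<in> A - B" for x
    proof
      assume "x \<in> closure {y. \<phi> y \<noteq> 0}"
      hence "x \<in> B" by (rule subsetD[OF T'(3)])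
      thus False using xAB by simp
    qed
    have e1: "(LINT x:A|lebesgue. u x * partial i \<phi> x) = (LINT x:B|lebesgue. u x * partial i \<phi> x)"
    proof (rule set_integral_eq_sub[OF BA])
      fix x assume "x \<in> A - B"
      hence "partial i \<phi> x = 0" by (rule partial_zero[OF z])
      thus "u x * partial i \<phi> x = 0" by simp
    qed
    have e2: "(LINT x:A|lebesgue. G x $ i * \<phi> x) = (LINT x:B|lebesgue. G x $ i * \<phi> x)"
    proof (rule set_integral_eq_sub[OF BA])
      fix x assume "x \<in> A - B"
      hence nc: "x \<notin> closure {y. \<phi> y \<noteq> 0}" by (rule z)
      have "x \<notin> {y. \<phi> y \<noteq> 0}"
      proof
        assume "x \<in> {y. \<phi> y \<noteq> 0}"
        hence "x \<in> closure {y. \<phi> y \<noteq> 0}" by (rule subsetD[OF closure_subset])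
        thus False using nc by contradiction
      qed
      hence "\<phi> x = 0" by simp
      thus "G x $ i * \<phi> x = 0" by simp
    qed
    have "(LINT x:A|lebesgue. u x * partial i \<phi> x) = - (LINT x:A|lebesgue. G x $ i * \<phi> x)"
      by (rule W2[rule_format, OF TA])
    thus "(LINT x:B|lebesgue. u x * partial i \<phi> x) = - (LINT x:B|lebesgue. G x $ i * \<phi> x)"
      using e1 e2 by simp
  qed
  show ?thesis unfolding weak_grad_def using P1 P2 by (rule conjI)
qed

lemma L2v_on_sub: assumes "L2v_on A G" "B \<in> sets lebesgue" "B \<subseteq> A" shows "L2v_on B G"
proof -
  have a: "set_borel_measurable lebesgue A G" "set_integrable lebesgue A (\<lambda>x. (norm (G x))\<^sup>2)"
    using assms(1) unfolding L2v_on_def by auto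
  show ?thesis unfolding L2v_on_def
    using set_borel_measurable_subset[OF a(1) assms(2,3)] set_integrable_subset[OF a(2) assms(2,3)] by simp
qed

lemma L2loc_on_sub: "L2loc_on A u \<Longrightarrow> B \<subseteq> A \<Longrightarrow> L2loc_on B u"
  unfolding L2loc_on_def by blast

lemma cap_mono: assumes "E \<subseteq> E'" shows "cap E \<le> cap E'"
  unfolding cap_def
proof (rule INF_superset_mono)
  show "{(u, G). weak_grad UNIV u G \<and> L2_on UNIV u \<and> L2v_on UNIV G \<and>
        (\<exists>U. open U \<and> E' \<subseteq> U \<and> (AE x in lebesgue. x \<in> U \<longrightarrow> 1 \<le> u x))} \<subseteq>
        {(u, G). weak_grad UNIV u G \<and> L2_on UNIV u \<and> L2v_on UNIV G \<and>
        (\<exists>U. open U \<and> E \<subseteq> U \<and> (AE x in lebesgue. x \<in> U \<longrightarrow> 1 \<le> u x))}"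
  proof (rule subsetI)
    fix z assume "z \<in> {(u, G). weak_grad UNIV u G \<and> L2_on UNIV u \<and> L2v_on UNIV G \<and>
        (\<exists>U. open U \<and> E' \<subseteq> U \<and> (AE x in lebesgue. x \<in> U \<longrightarrow> 1 \<le> u x))}"
    then obtain u G U where z: "z = (u,G)" "weak_grad UNIV u G" "L2_on UNIV u" "L2v_on UNIV G" "open U"
      "E' \<subseteq> U" "AE x in lebesgue. x \<in> U \<longrightarrow> 1 \<le> u x" by blast
    have "E \<subseteq> U" using assms z(6) by (rule subset_trans)
    thus "z \<in> {(u, G). weak_grad UNIV u G \<and> L2_on UNIV u \<and> L2v_on UNIV G \<and>
        (\<exists>U. open U \<and> E \<subseteq> U \<and> (AE x in lebesgue. x \<in> U \<longrightarrow> 1 \<le> u x))}"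
      using z by blast
  qed
qed simp

lemma quasicont_on_sub: assumes "quasicont_on S f" "S' \<subseteq> S" shows "quasicont_on S' f"
  unfolding quasicont_on_def
proof (intro allI impI)
  fix e :: real assume "e > 0"
  then obtain U where "open U" "cap U < ennreal e" "continuous_on (S - U) f"
    using assms(1) unfolding quasicont_on_def by blast
  moreover have "S' - U \<subseteq> S - U" using assms(2) by auto
  ultimately show "\<exists>U. open U \<and> cap U < ennreal e \<and> continuous_on (S' - U) f"
    using continuous_on_subset by blast
qed

lemma bc_qe_sub: assumes "bc_qe \<Omega> N K g v" "K \<subseteq> K'" shows "bc_qe \<Omega> N K' g v"
proof -
  obtain vt gt where B: "quasicont_on (closure \<Omega> - K) vt" "(AE x in lebesgue. x \<in> \<Omega> - K \<longrightarrow> vt x = v x)"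
      "quasicont_on (closure \<Omega>) gt" "(AE x in lebesgue. x \<in> \<Omega> \<longrightarrow> gt x = g x)"
      "cap {x \<in> Dir_bdry \<Omega> N - K. vt x \<noteq> gt x} = 0"
    using assms(1) unfolding bc_qe_def by blast
  show ?thesis unfolding bc_qe_def
  proof (intro exI conjI)
    show "quasicont_on (closure \<Omega> - K') vt" using quasicont_on_sub[OF B(1)] assms(2) by auto
    show "AE x in lebesgue. x \<in> \<Omega> - K' \<longrightarrow> vt x = v x" using B(2) by (rule eventually_mono) (use assms(2) in auto)
    show "quasicont_on (closure \<Omega>) gt" by (rule B(3))
    show "AE x in lebesgue. x \<in> \<Omega> \<longrightarrow> gt x = g x" by (rule B(4))
    have "cap {x \<in> Dir_bdry \<Omega> N - K'. vt x \<noteq> gt x} \<le> cap {x \<in> Dir_bdry \<Omega> N - K. vt x \<noteq> gt x}"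
      by (rule cap_mono) (use assms(2) in auto)
    thus "cap {x \<in> Dir_bdry \<Omega> N - K'. vt x \<noteq> gt x} = 0" using B(5) by simp
  qed
qed

lemma Dir_mono:
  assumes "open \<Omega>" "closed K'" "K \<subseteq> K'"
  shows "Dir \<Omega> N g K' \<le> Dir \<Omega> N g K"
  unfolding Dir_def
proof (rule INF_greatest)
  fix vG assume "vG \<in> adm \<Omega> N g K"
  then obtain v G where vG: "vG = (v, G)" and A: "L2loc_on (\<Omega> - K) v" "weak_grad (\<Omega> - K) v G"
      "L2v_on (\<Omega> - K) G" "bc_qe \<Omega> N K g v"
    unfolding adm_def by auto
  have sub: "\<Omega> - K' \<subseteq> \<Omega> - K" using assms by auto
  have ms: "\<Omega> - K' \<in> sets lebesgue" using assms by (simp add: open_Diff)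
  have "(v, G) \<in> adm \<Omega> N g K'"
    unfolding adm_def mem_Collect_eq case_prod_conv
    using L2loc_on_sub[OF A(1) sub] weak_grad_sub[OF A(2) sub] L2v_on_sub[OF A(3) ms sub]
      bc_qe_sub[OF A(4) assms(3)] by blast
  hence "(INF vG\<in>adm \<Omega> N g K'. dval \<Omega> K' vG) \<le> dval \<Omega> K' (v, G)" by (rule INF_lower)
  also have "\<dots> \<le> dval \<Omega> K (v, G)"
  proof -
    have i: "set_integrable lebesgue (\<Omega> - K) (\<lambda>x. (norm (G x))\<^sup>2)" using A(3) unfolding L2v_on_def by simp
    have i2: "set_integrable lebesgue (\<Omega> - K') (\<lambda>x. (norm (G x))\<^sup>2)" by (rule set_integrable_subset[OF i ms sub])
    have "(LINT x:(\<Omega> - K')|lebesgue. (norm (G x))\<^sup>2) \<le> (LINT x:(\<Omega> - K)|lebesgue. (norm (G x))\<^sup>2)"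
      using i i2 unfolding set_lebesgue_integral_def set_integrable_def
      by (intro integral_mono) (use sub in \<open>auto split: split_indicator\<close>)
    thus ?thesis unfolding dval_def by (simp add: ennreal_leI)
  qed
  finally show "(INF vG\<in>adm \<Omega> N g K'. dval \<Omega> K' vG) \<le> dval \<Omega> K vG" using vG by simp
qed


lemma ac_mono:
  fixes F :: "real \<Rightarrow> real"
  assumes ac: "abs_cont_on a b F" and ab: "a \<le> b"
    and N: "N \<in> sets lebesgue" "emeasure lebesgue N = 0"
    and loc: "\<And>x \<epsilon>. x \<in> {a..b} \<Longrightarrow> x \<notin> N \<Longrightarrow> \<epsilon> > 0 \<Longrightarrow> \<exists>r>0. \<forall>c d. a \<le> c \<and> c \<le> x \<and> x \<le> d \<and> d \<le> b
            \<and> x - c < r \<and> d - x < r \<longrightarrow> F d - F c \<le> \<epsilon> * (d - c)"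
  shows "F b \<le> F a"
proof (rule ccontr)
  assume "\<not> F b \<le> F a"
  define D where "D = F b - F a"
  have D: "D > 0" using \<open>\<not> F b \<le> F a\<close> unfolding D_def by simp
  define y where "y = b - a + 1"
  have y: "y > 0" unfolding y_def using ab by simp
  define \<epsilon> where "\<epsilon> = D / (2 * y)"
  have e: "\<epsilon> > 0" unfolding \<epsilon>_def using D y by simp
  have "D \<le> \<epsilon> * (b - a) + \<epsilon>" unfolding D_def by (rule ac_step[OF ac ab N loc e])
  also have "\<epsilon> * (b - a) + \<epsilon> = \<epsilon> * y" unfolding y_def by (simp add: algebra_simps)
  also have "\<dots> = D / 2" unfolding \<epsilon>_def using y by (simp add: field_simps)
  finally show False using D by simp
qed

lemma abs_cont_sub:
  assumes "abs_cont_on a b f" "a \<le> a'" "b' \<le> b"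
  shows "abs_cont_on a' b' f"
  unfolding abs_cont_on_def
proof (intro allI impI)
  fix e :: real assume "e > 0"
  then obtain d where d: "d > 0" "\<forall>I :: (real \<times> real) set.
     finite I \<longrightarrow> (\<forall>(c,d)\<in>I. a \<le> c \<and> c \<le> d \<and> d \<le> b) \<longrightarrow>
     (\<forall>(c,d)\<in>I. \<forall>(c',d')\<in>I. (c,d) \<noteq> (c',d') \<longrightarrow> d \<le> c' \<or> d' \<le> c) \<longrightarrow>
     (\<Sum>(c,d)\<in>I. d - c) < d \<longrightarrow> (\<Sum>(c,d)\<in>I. \<bar>f d - f c\<bar>) < e"
    using assms(1) unfolding abs_cont_on_def by meson
  show "\<exists>\<delta>>0. \<forall>I :: (real \<times> real) set.
     finite I \<longrightarrow> (\<forall>(c,d)\<in>I. a' \<le> c \<and> c \<le> d \<and> d \<le> b') \<longrightarrow>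
     (\<forall>(c,d)\<in>I. \<forall>(c',d')\<in>I. (c,d) \<noteq> (c',d') \<longrightarrow> d \<le> c' \<or> d' \<le> c) \<longrightarrow>
     (\<Sum>(c,d)\<in>I. d - c) < \<delta> \<longrightarrow> (\<Sum>(c,d)\<in>I. \<bar>f d - f c\<bar>) < e"
  proof (intro exI[of _ d] conjI allI impI)
    fix I :: "(real \<times> real) set"
    assume A: "finite I" "\<forall>(c,d)\<in>I. a' \<le> c \<and> c \<le> d \<and> d \<le> b'"
      "\<forall>(c,d)\<in>I. \<forall>(c',d')\<in>I. (c,d) \<noteq> (c',d') \<longrightarrow> d \<le> c' \<or> d' \<le> c" "(\<Sum>(c,d)\<in>I. d - c) < d"
    have "\<forall>(c,d)\<in>I. a \<le> c \<and> c \<le> d \<and> d \<le> b" using A(2) assms(2,3) by auto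
    thus "(\<Sum>(c,d)\<in>I. \<bar>f d - f c\<bar>) < e" using d(2) A(1,3,4) by blast
  qed (rule d(1))
qed

lemma abs_cont_lin:
  assumes f: "abs_cont_on a b f" and g: "abs_cont_on a b g"
  shows "abs_cont_on a b (\<lambda>x. f x + k * g x)"
  unfolding abs_cont_on_def
proof (intro allI impI)
  fix e :: real assume e: "e > 0"
  define k' where "k' = \<bar>k\<bar> + 1"
  have k': "k' > 0" "\<bar>k\<bar> \<le> k'" unfolding k'_def by auto
  have e2: "e / 2 > 0" "e / (2 * k') > 0" using e k' by auto
  obtain d1 where d1: "d1 > 0" "\<forall>I :: (real \<times> real) set.
     finite I \<longrightarrow> (\<forall>(c,d)\<in>I. a \<le> c \<and> c \<le> d \<and> d \<le> b) \<longrightarrow>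
     (\<forall>(c,d)\<in>I. \<forall>(c',d')\<in>I. (c,d) \<noteq> (c',d') \<longrightarrow> d \<le> c' \<or> d' \<le> c) \<longrightarrow>
     (\<Sum>(c,d)\<in>I. d - c) < d1 \<longrightarrow> (\<Sum>(c,d)\<in>I. \<bar>f d - f c\<bar>) < e / 2"
    using f e2(1) unfolding abs_cont_on_def by meson
  obtain d2 where d2: "d2 > 0" "\<forall>I :: (real \<times> real) set.
     finite I \<longrightarrow> (\<forall>(c,d)\<in>I. a \<le> c \<and> c \<le> d \<and> d \<le> b) \<longrightarrow>
     (\<forall>(c,d)\<in>I. \<forall>(c',d')\<in>I. (c,d) \<noteq> (c',d') \<longrightarrow> d \<le> c' \<or> d' \<le> c) \<longrightarrow>
     (\<Sum>(c,d)\<in>I. d - c) < d2 \<longrightarrow> (\<Sum>(c,d)\<in>I. \<bar>g d - g c\<bar>) < e / (2 * k')"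
    using g e2(2) unfolding abs_cont_on_def by meson
  show "\<exists>\<delta>>0. \<forall>I :: (real \<times> real) set.
     finite I \<longrightarrow> (\<forall>(c,d)\<in>I. a \<le> c \<and> c \<le> d \<and> d \<le> b) \<longrightarrow>
     (\<forall>(c,d)\<in>I. \<forall>(c',d')\<in>I. (c,d) \<noteq> (c',d') \<longrightarrow> d \<le> c' \<or> d' \<le> c) \<longrightarrow>
     (\<Sum>(c,d)\<in>I. d - c) < \<delta> \<longrightarrow> (\<Sum>(c,d)\<in>I. \<bar>(f d + k * g d) - (f c + k * g c)\<bar>) < e"
  proof (intro exI[of _ "min d1 d2"] conjI allI impI)
    show "min d1 d2 > 0" using d1 d2 by simp
    fix I :: "(real \<times> real) set"
    assume A: "finite I" "\<forall>(c,d)\<in>I. a \<le> c \<and> c \<le> d \<and> d \<le> b"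
      "\<forall>(c,d)\<in>I. \<forall>(c',d')\<in>I. (c,d) \<noteq> (c',d') \<longrightarrow> d \<le> c' \<or> d' \<le> c" "(\<Sum>(c,d)\<in>I. d - c) < min d1 d2"
    have s1: "(\<Sum>(c,d)\<in>I. \<bar>f d - f c\<bar>) < e / 2" using d1(2) A by auto
    have s2: "(\<Sum>(c,d)\<in>I. \<bar>g d - g c\<bar>) < e / (2 * k')" using d2(2) A by auto
    have "(\<Sum>(c,d)\<in>I. \<bar>(f d + k * g d) - (f c + k * g c)\<bar>) \<le> (\<Sum>(c,d)\<in>I. \<bar>f d - f c\<bar> + k' * \<bar>g d - g c\<bar>)"
    proof (rule sum_mono, clarify)
      fix c d
      have "\<bar>(f d + k * g d) - (f c + k * g c)\<bar> \<le> \<bar>f d - f c\<bar> + \<bar>k\<bar> * \<bar>g d - g c\<bar>"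
        by (metis abs_mult abs_triangle_ineq add_diff_add right_diff_distrib)
      also have "\<dots> \<le> \<bar>f d - f c\<bar> + k' * \<bar>g d - g c\<bar>"
        using k' by (simp add: mult_right_mono)
      finally show "\<bar>(f d + k * g d) - (f c + k * g c)\<bar> \<le> \<bar>f d - f c\<bar> + k' * \<bar>g d - g c\<bar>" .
    qed
    also have "\<dots> = (\<Sum>(c,d)\<in>I. \<bar>f d - f c\<bar>) + k' * (\<Sum>(c,d)\<in>I. \<bar>g d - g c\<bar>)"
      by (simp add: sum.distrib sum_distrib_left case_prod_unfold)
    also have "\<dots> < e / 2 + k' * (e / (2 * k'))"
      using s1 s2 k' by (intro add_strict_mono mult_strict_left_mono) auto
    also have "\<dots> = e" using k' by (simp add: field_simps)
    finally show "(\<Sum>(c,d)\<in>I. \<bar>(f d + k * g d) - (f c + k * g c)\<bar>) < e" .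
  qed
qed

lemma abs_cont_sq:
  assumes f: "abs_cont_on a b f" and M: "\<And>x. x \<in> {a..b} \<Longrightarrow> \<bar>f x\<bar> \<le> M"
  shows "abs_cont_on a b (\<lambda>x. (f x)\<^sup>2)"
  unfolding abs_cont_on_def
proof (intro allI impI)
  fix e :: real assume e: "e > 0"
  define k' where "k' = 2 * \<bar>M\<bar> + 1"
  have k': "k' > 0" unfolding k'_def by auto
  have e2: "e / k' > 0" using e k' by auto
  obtain d2 where d2: "d2 > 0" "\<forall>I :: (real \<times> real) set.
     finite I \<longrightarrow> (\<forall>(c,d)\<in>I. a \<le> c \<and> c \<le> d \<and> d \<le> b) \<longrightarrow>
     (\<forall>(c,d)\<in>I. \<forall>(c',d')\<in>I. (c,d) \<noteq> (c',d') \<longrightarrow> d \<le> c' \<or> d' \<le> c) \<longrightarrow>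
     (\<Sum>(c,d)\<in>I. d - c) < d2 \<longrightarrow> (\<Sum>(c,d)\<in>I. \<bar>f d - f c\<bar>) < e / k'"
    using f e2 unfolding abs_cont_on_def by meson
  show "\<exists>\<delta>>0. \<forall>I :: (real \<times> real) set.
     finite I \<longrightarrow> (\<forall>(c,d)\<in>I. a \<le> c \<and> c \<le> d \<and> d \<le> b) \<longrightarrow>
     (\<forall>(c,d)\<in>I. \<forall>(c',d')\<in>I. (c,d) \<noteq> (c',d') \<longrightarrow> d \<le> c' \<or> d' \<le> c) \<longrightarrow>
     (\<Sum>(c,d)\<in>I. d - c) < \<delta> \<longrightarrow> (\<Sum>(c,d)\<in>I. \<bar>(f d)\<^sup>2 - (f c)\<^sup>2\<bar>) < e"
  proof (intro exI[of _ d2] conjI allI impI)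
    show "d2 > 0" using d2 by simp
    fix I :: "(real \<times> real) set"
    assume A: "finite I" "\<forall>(c,d)\<in>I. a \<le> c \<and> c \<le> d \<and> d \<le> b"
      "\<forall>(c,d)\<in>I. \<forall>(c',d')\<in>I. (c,d) \<noteq> (c',d') \<longrightarrow> d \<le> c' \<or> d' \<le> c" "(\<Sum>(c,d)\<in>I. d - c) < d2"
    have s2: "(\<Sum>(c,d)\<in>I. \<bar>f d - f c\<bar>) < e / k'" using d2(2) A by auto
    have "(\<Sum>(c,d)\<in>I. \<bar>(f d)\<^sup>2 - (f c)\<^sup>2\<bar>) \<le> (\<Sum>(c,d)\<in>I. k' * \<bar>f d - f c\<bar>)"
    proof (rule sum_mono)
      fix p assume "p \<in> I"
      then obtain c d where p: "p = (c,d)" "a \<le> c" "c \<le> d" "d \<le> b" using A(2) by auto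
      have Mc: "\<bar>f c\<bar> \<le> M" "\<bar>f d\<bar> \<le> M" using M p by auto
      have "\<bar>(f d)\<^sup>2 - (f c)\<^sup>2\<bar> = \<bar>f d + f c\<bar> * \<bar>f d - f c\<bar>"
        by (simp add: power2_eq_square abs_mult[symmetric] algebra_simps)
      also have "\<dots> \<le> k' * \<bar>f d - f c\<bar>"
      proof (rule mult_right_mono)
        have "\<bar>f d + f c\<bar> \<le> \<bar>f d\<bar> + \<bar>f c\<bar>" by (rule abs_triangle_ineq)
        thus "\<bar>f d + f c\<bar> \<le> k'" using Mc unfolding k'_def by linarith
      qed simp
      finally show "(case p of (c,d) \<Rightarrow> \<bar>(f d)\<^sup>2 - (f c)\<^sup>2\<bar>) \<le> (case p of (c,d) \<Rightarrow> k' * \<bar>f d - f c\<bar>)"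
        using p by simp
    qed
    also have "\<dots> = k' * (\<Sum>(c,d)\<in>I. \<bar>f d - f c\<bar>)"
      by (simp add: sum_distrib_left case_prod_unfold)
    also have "\<dots> < k' * (e / k')"
      using s2 k' by (intro mult_strict_left_mono) auto
    also have "\<dots> = e" using k' by (simp add: field_simps)
    finally show "(\<Sum>(c,d)\<in>I. \<bar>(f d)\<^sup>2 - (f c)\<^sup>2\<bar>) < e" .
  qed
qed


lemma enn2real_add_fin: "a < top \<Longrightarrow> b < top \<Longrightarrow> enn2real (a + b) = enn2real a + enn2real b"
  by (cases a rule: ennreal_cases; cases b rule: ennreal_cases) (auto simp flip: ennreal_plus)

theorem proposition7p12:
  fixes \<Omega> N K0 :: "pt set" and K :: "real \<Rightarrow> pt set"
    and \<phi> :: "real \<Rightarrow> real" and h :: "pt \<Rightarrow> real" and m :: nat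
  assumes "bounded \<Omega>" "connected \<Omega>" "open \<Omega>" "lipschitz_boundary \<Omega>"
    and "openin (top_of_set (frontier \<Omega>)) N" "finite (components N)"
    and "m \<ge> 1"
    and "abs_cont_on 0 1 \<phi>" "mono_on {0..1} \<phi>" "\<forall>t\<in>{0..1}. \<phi> t \<ge> 0"
    and "h \<in> H1space \<Omega>"
    and "K0 \<in> Kmf m \<Omega>" "\<forall>t\<in>{0..1}. K t \<in> Kmf m \<Omega>"
    and a: "\<forall>s t. 0 \<le> s \<and> s \<le> t \<and> t \<le> 1 \<longrightarrow> K0 \<subseteq> K s \<and> K s \<subseteq> K t"
    and b: "\<forall>K'\<in>Kmf m \<Omega>. K0 \<subseteq> K' \<longrightarrow>
              energy \<Omega> N (\<lambda>x. \<phi> 0 * h x) (K 0) \<le> energy \<Omega> N (\<lambda>x. \<phi> 0 * h x) K'"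
    and c: "\<forall>t\<in>{0..1}. \<forall>K'\<in>Kmf m \<Omega>. K t \<subseteq> K' \<longrightarrow>
              energy \<Omega> N (\<lambda>x. \<phi> t * h x) (K t) \<le> energy \<Omega> N (\<lambda>x. \<phi> t * h x) K'"
    and d: "abs_cont_on 0 1 (\<lambda>t. enn2real (energy \<Omega> N (\<lambda>x. \<phi> t * h x) (K t)))"
    and e: "AE t in lebesgue. t \<in> {0..1} \<longrightarrow>
              ((\<lambda>s. enn2real (energy \<Omega> N (\<lambda>x. \<phi> t * h x) (K s))) has_real_derivative 0)
                (at t within {0..1})"
  shows "\<forall>s t. 0 \<le> s \<and> s < t \<and> t \<le> 1 \<longrightarrow>
           energy \<Omega> N (\<lambda>x. \<phi> t * h x) (K t) \<le> energy \<Omega> N (\<lambda>x. \<phi> t * h x) (K s)"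
proof (intro allI impI)
  fix s t :: real assume st: "0 \<le> s \<and> s < t \<and> t \<le> 1"
  hence s0: "0 \<le> s" "s < t" "t \<le> 1" by auto
  define D where "D \<sigma> = Dir \<Omega> N h (K \<sigma>)" for \<sigma>
  define Hk where "Hk \<sigma> = H1 (K \<sigma>)" for \<sigma>
  define E where "E c \<sigma> = energy \<Omega> N (\<lambda>x. \<phi> c * h x) (K \<sigma>)" for c \<sigma>
  have EN: "E c \<sigma> = ennreal ((\<phi> c)\<^sup>2) * D \<sigma> + Hk \<sigma>" for c \<sigma>
    unfolding E_def energy_Dir D_def Hk_def Dir_scale ..
  have Kmf: "K \<sigma> \<in> Kmf m \<Omega>" if "\<sigma> \<in> {0..1}" for \<sigma> using assms(13) that by blast
  have Hfin: "Hk \<sigma> < top" if "\<sigma> \<in> {0..1}" for \<sigma> using Kmf[OF that] unfolding Kmf_def Hk_def by auto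
  have Kcl: "closed (K \<sigma>)" if "\<sigma> \<in> {0..1}" for \<sigma> using Kmf[OF that] unfolding Kmf_def by (auto intro: compact_imp_closed)
  have Dmono: "D \<tau> \<le> D \<sigma>" if "0 \<le> \<sigma>" "\<sigma> \<le> \<tau>" "\<tau> \<le> 1" for \<sigma> \<tau>
  proof -
    have "K \<sigma> \<subseteq> K \<tau>" using a that by blast
    moreover have "\<tau> \<in> {0..1}" using that by auto
    hence "closed (K \<tau>)" by (rule Kcl)
    ultimately show ?thesis unfolding D_def by (intro Dir_mono[OF assms(3)])
  qed
  have phimono: "\<phi> x \<le> \<phi> y" if "0 \<le> x" "x \<le> y" "y \<le> 1" for x y
    by (rule mono_onD[OF assms(9)]) (use that in auto)
  have phinn: "\<phi> x \<ge> 0" if "0 \<le> x" "x \<le> 1" for x using assms(10) that by auto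
  have main: "E t t \<le> E t s"
  proof (cases "E t s = top")
    case True show ?thesis unfolding True by (rule top_greatest)
  next
    case False
    define Dr where "Dr \<sigma> = enn2real (D \<sigma>)" for \<sigma>
    define Hr where "Hr \<sigma> = enn2real (Hk \<sigma>)" for \<sigma>
    define Dv where "Dv = Dr s"
    have fin_or_zero: "\<phi> t = 0 \<or> D s < top"
    proof (rule ccontr)
      assume A: "\<not> (\<phi> t = 0 \<or> D s < top)"
      hence nz: "\<phi> t \<noteq> 0" by blast
      from A have "\<not> D s < top" by blast
      hence Dtop: "D s = top" using top.not_eq_extremum by blast
      have "(\<phi> t)\<^sup>2 > 0" using nz by simp
      hence "ennreal ((\<phi> t)\<^sup>2) \<noteq> 0" by simp
      hence "ennreal ((\<phi> t)\<^sup>2) * D s = top" unfolding Dtop by (rule ennreal_top_mult_left)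
      hence "E t s = top" unfolding EN by simp
      thus False using False by contradiction
    qed
    have key: "enn2real (E x \<sigma>) = (\<phi> x)\<^sup>2 * Dr \<sigma> + Hr \<sigma> \<and> E x \<sigma> < top"
      if "\<sigma> \<in> {s..t}" "x \<in> {s..t}" for x \<sigma>
    proof (cases "\<phi> t = 0")
      case True
      have "\<phi> x = 0" using phimono[of x t] phinn[of x] that s0 True by auto
      moreover have "Hk \<sigma> < top" using Hfin that s0 by auto
      ultimately show ?thesis unfolding EN Hr_def by simp
    next
      case False
      hence Ds: "D s < top" using fin_or_zero by simp
      have "D \<sigma> \<le> D s" using Dmono[of s \<sigma>] that s0 by auto
      hence Dsig: "D \<sigma> < top" using Ds by (rule le_less_trans)
      have Hs: "Hk \<sigma> < top" using Hfin that s0 by auto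
      have m: "ennreal ((\<phi> x)\<^sup>2) * D \<sigma> < top" using Dsig by (simp add: ennreal_mult_less_top)
      show ?thesis unfolding EN Hr_def Dr_def
        using enn2real_add_fin[OF m Hs] enn2real_mult[of "ennreal ((\<phi> x)\<^sup>2)" "D \<sigma>"] m Hs
        by (simp add: order_less_imp_le)
    qed
    have signs: "((\<phi> v)\<^sup>2 - (\<phi> u)\<^sup>2) * (Dr w - Dv) \<le> 0"
      if "u \<in> {s..t}" "v \<in> {s..t}" "w \<in> {s..t}" "u \<le> v" for u v w
    proof (cases "\<phi> t = 0")
      case True
      have "\<phi> u = 0" "\<phi> v = 0" using phimono[of u t] phinn[of u] phimono[of v t] phinn[of v] that s0 True by auto
      thus ?thesis by simp
    next
      case False
      hence Ds: "D s < top" using fin_or_zero by simp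
      have "D w \<le> D s" using Dmono[of s w] that s0 by auto
      hence "Dr w \<le> Dv" unfolding Dr_def Dv_def using Ds by (rule enn2real_mono)
      moreover have "(\<phi> u)\<^sup>2 \<le> (\<phi> v)\<^sup>2"
        using phimono[of u v] phinn[of u] that s0 by (auto intro: power_mono)
      ultimately show ?thesis by (simp add: mult_nonneg_nonpos)
    qed
    define F where "F \<sigma> = enn2real (E \<sigma> \<sigma>) - Dv * (\<phi> \<sigma>)\<^sup>2" for \<sigma>
    have acF: "abs_cont_on s t F"
    proof -
      have ac1: "abs_cont_on s t (\<lambda>\<sigma>. enn2real (E \<sigma> \<sigma>))"
        using abs_cont_sub[OF d s0(1)] s0 unfolding E_def by auto
      have "abs_cont_on s t \<phi>" using abs_cont_sub[OF assms(8) s0(1)] s0 by auto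
      moreover have "\<bar>\<phi> x\<bar> \<le> \<phi> 1" if "x \<in> {s..t}" for x
        using phimono[of x 1] phinn[of x] that s0 by auto
      ultimately have ac2: "abs_cont_on s t (\<lambda>\<sigma>. (\<phi> \<sigma>)\<^sup>2)" by (rule abs_cont_sq)
      have "abs_cont_on s t (\<lambda>\<sigma>. enn2real (E \<sigma> \<sigma>) + (- Dv) * (\<phi> \<sigma>)\<^sup>2)"
        by (rule abs_cont_lin[OF ac1 ac2])
      moreover have "(\<lambda>\<sigma>. enn2real (E \<sigma> \<sigma>) + (- Dv) * (\<phi> \<sigma>)\<^sup>2) = F" unfolding F_def by auto
      ultimately show ?thesis by simp
    qed
    obtain Nn where Nn: "{x \<in> space lebesgue. \<not> (x \<in> {0..1} \<longrightarrow>
              ((\<lambda>s. enn2real (energy \<Omega> N (\<lambda>y. \<phi> x * h y) (K s))) has_real_derivative 0)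
                (at x within {0..1}))} \<subseteq> Nn" "emeasure lebesgue Nn = 0" "Nn \<in> sets lebesgue"
      using e by (rule AE_E)
    have "F t \<le> F s"
    proof (rule ac_mono[OF acF less_imp_le[OF s0(2)] Nn(3) Nn(2)])
      fix x \<epsilon> :: real assume x: "x \<in> {s..t}" "x \<notin> Nn" and eps: "\<epsilon> > 0"
      have x01: "x \<in> {0..1}" using x s0 by auto
      have "((\<lambda>s. enn2real (E x s)) has_real_derivative 0) (at x within {0..1})"
        using Nn(1) x x01 unfolding E_def by auto
      hence "((\<lambda>s. enn2real (E x s)) has_derivative (*) 0) (at x within {0..1})"
        unfolding has_field_derivative_def .
      then obtain r where r: "r > 0" "\<forall>y\<in>{0..1}. norm (y - x) < r \<longrightarrow>
          norm (enn2real (E x y) - enn2real (E x x) - 0 * (y - x)) \<le> \<epsilon> * norm (y - x)"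
        unfolding has_derivative_within_alt using eps by blast
      show "\<exists>r>0. \<forall>c d. s \<le> c \<and> c \<le> x \<and> x \<le> d \<and> d \<le> t \<and> x - c < r \<and> d - x < r \<longrightarrow>
              F d - F c \<le> \<epsilon> * (d - c)"
      proof (intro exI[of _ r] conjI allI impI)
        show "r > 0" by (rule r(1))
        fix c d assume cd: "s \<le> c \<and> c \<le> x \<and> x \<le> d \<and> d \<le> t \<and> x - c < r \<and> d - x < r"
        have c01: "c \<in> {0..1}" "d \<in> {0..1}" using cd s0 by auto
        have ad: "norm (d - x) < r" "norm (c - x) < r" using cd by auto
        have dd: "norm (enn2real (E x d) - enn2real (E x x) - 0 * (d - x)) \<le> \<epsilon> * norm (d - x)"
          using r(2) c01(2) ad(1) by blast
        have cc: "norm (enn2real (E x c) - enn2real (E x x) - 0 * (c - x)) \<le> \<epsilon> * norm (c - x)"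
          using r(2) c01(1) ad(2) by blast
        have nd: "norm (d - x) = d - x" "norm (c - x) = x - c" using cd by auto
        have "\<bar>enn2real (E x d) - enn2real (E x x)\<bar> \<le> \<epsilon> * (d - x)" using dd unfolding nd by simp
        hence ed: "enn2real (E x d) - enn2real (E x x) \<le> \<epsilon> * (d - x)" by (rule abs_le_D1)
        have "\<bar>enn2real (E x c) - enn2real (E x x)\<bar> \<le> \<epsilon> * (x - c)" using cc unfolding nd by simp
        hence ec: "enn2real (E x x) - enn2real (E x c) \<le> \<epsilon> * (x - c)" by (rule abs_le_D2[THEN order_trans[rotated]]) simp
        have cst: "c \<in> {s..t}" "d \<in> {s..t}" using cd by auto
        have k1: "enn2real (E x d) = (\<phi> x)\<^sup>2 * Dr d + Hr d" using key[OF cst(2) x(1)] by simp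
        have k2: "enn2real (E x x) = (\<phi> x)\<^sup>2 * Dr x + Hr x" using key[OF x(1) x(1)] by simp
        have k3: "enn2real (E x c) = (\<phi> x)\<^sup>2 * Dr c + Hr c" using key[OF cst(1) x(1)] by simp
        have k4: "enn2real (E d d) = (\<phi> d)\<^sup>2 * Dr d + Hr d" using key[OF cst(2) cst(2)] by simp
        have k5: "enn2real (E c c) = (\<phi> c)\<^sup>2 * Dr c + Hr c" using key[OF cst(1) cst(1)] by simp
        have sg1: "((\<phi> d)\<^sup>2 - (\<phi> x)\<^sup>2) * (Dr d - Dv) \<le> 0" using signs[OF x(1) cst(2) cst(2)] cd by simp
        have sg2: "((\<phi> x)\<^sup>2 - (\<phi> c)\<^sup>2) * (Dr c - Dv) \<le> 0" using signs[OF cst(1) x(1) cst(1)] cd by simp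
        have "F d - F c = (enn2real (E x d) - enn2real (E x x)) + (enn2real (E x x) - enn2real (E x c))
             + ((\<phi> d)\<^sup>2 - (\<phi> x)\<^sup>2) * (Dr d - Dv) + ((\<phi> x)\<^sup>2 - (\<phi> c)\<^sup>2) * (Dr c - Dv)"
          unfolding F_def k1 k2 k3 k4 k5 by (simp add: algebra_simps)
        also have "\<dots> \<le> \<epsilon> * (d - x) + \<epsilon> * (x - c) + 0 + 0" using ed ec sg1 sg2 by linarith
        also have "\<dots> = \<epsilon> * (d - c)" by (simp add: algebra_simps)
        finally show "F d - F c \<le> \<epsilon> * (d - c)" .
      qed
    qed
    have sst: "s \<in> {s..t}" "t \<in> {s..t}" using s0 by auto
    have "enn2real (E t t) \<le> enn2real (E t s)"
      using \<open>F t \<le> F s\<close> key[OF sst(2) sst(2)] key[OF sst(1) sst(1)] key[OF sst(1) sst(2)]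
      unfolding F_def Dv_def by (simp add: algebra_simps)
    moreover have "E t t < top" "E t s < top" using key[OF sst(2) sst(2)] key[OF sst(1) sst(2)] by auto
    ultimately show "E t t \<le> E t s"
      by (metis ennreal_enn2real ennreal_leI)
  qed
  thus "energy \<Omega> N (\<lambda>x. \<phi> t * h x) (K t) \<le> energy \<Omega> N (\<lambda>x. \<phi> t * h x) (K s)"
    unfolding E_def .
qed

end
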